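(* Let $n$ be a non-negative integer. Then \[ \sum_{k=0}^{n}(-1)^k\binom{n}{k}2^{-2k}\binom{2k}{k}H_k^{(2)}=\binom{2n}{n}2^{-2n}H_n^{(2)}-\sum_{k=0}^{n-1}\frac{H_n-H_k}{n-k}\binom{2k}{k}2^{-2k}, \] and, more generally, for all complex numbers $u,v$ with $\Re u>-1$ and $\Re v>-1$, \[ \begin{aligned} &\sum_{k=0}^{n}(-1)^k\binom{n}{k}2^{-2k}\binom{2k+v}{(2k+v)/2}\binom{(2k+u+v)/2}{u/2}^{-1}H_k^{(2)}\\ &\quad=\binom{v}{v/2}\binom{u}{u/2}^{-1}\binom{2n+u}{(2n+u)/2}\binom{(2n+u+v)/2}{v/2}^{-1}2^{-2n}H_n^{(2)}\\ &\qquad-\binom{v}{v/2}\binom{u}{u/2}^{-1}\sum_{k=0}^{n-1}\frac{H_n-H_k}{n-k}\binom{2k+u}{(2k+u)/2}2^{-2k}\binom{(2k+u+v)/2}{v/2}^{-1}. \end{aligned} \]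
   Context: For integers $m\ge0$, $H_m=\sum_{j=1}^m 1/j$ and $H_m^{(2)}=\sum_{j=1}^m 1/j^2$. Binomial coefficients with complex entries: $\binom{x}{y}=\frac{\Gamma(x+1)}{\Gamma(y+1)\Gamma(x-y+1)}$. *)

theory Defs
  imports "HOL-Analysis.Analysis"
begin

definition harm1 :: "nat \<Rightarrow> real" where
  "harm1 m = (\<Sum>j=1..m. 1 / real j)"

definition harm2 :: "nat \<Rightarrow> real" where
  "harm2 m = (\<Sum>j=1..m. 1 / (real j)^2)"

definition cbinom :: "complex \<Rightarrow> complex \<Rightarrow> complex" where
  "cbinom x y = Gamma (x + 1) / (Gamma (y + 1) * Gamma (x - y + 1))"

end

theory Submission
  imports Defs
begin

lemma harm1_Suc: "harm1 (Suc m) = harm1 m + 1 / real (Suc m)"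
  unfolding harm1_def by simp
lemma harm2_Suc: "harm2 (Suc m) = harm2 m + 1 / (real (Suc m))^2"
  unfolding harm2_def by simp

lemma pascal_alt:
  fixes f :: "nat \<Rightarrow> 'a::comm_ring_1"
  shows "(\<Sum>i\<le>Suc N. (-1)^i * of_nat (Suc N choose i) * f i) =
     (\<Sum>i\<le>N. (-1)^i * of_nat (N choose i) * f i) - (\<Sum>i\<le>N. (-1)^i * of_nat (N choose i) * f (Suc i))"
proof -
  have h1: "(\<Sum>i\<le>Suc N. (-1)^i * of_nat (Suc N choose i) * f i) =
      f 0 + (\<Sum>i\<le>N. (-1)^(Suc i) * of_nat (N choose i) * f (Suc i)) + (\<Sum>i\<le>N. (-1)^(Suc i) * of_nat (N choose Suc i) * f (Suc i))"
    apply (subst sum.atMost_Suc_shift)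
    apply (simp add: algebra_simps flip: sum.distrib)
    done
  have h2: "f 0 + (\<Sum>i\<le>N. (-1)^(Suc i) * of_nat (N choose Suc i) * f (Suc i)) = (\<Sum>i\<le>Suc N. (-1)^i * of_nat (N choose i) * f i)"
    by (subst sum.atMost_Suc_shift) (simp add: binomial_eq_0)
  have h3: "(\<Sum>i\<le>Suc N. (-1)^i * of_nat (N choose i) * f i) = (\<Sum>i\<le>N. (-1)^i * of_nat (N choose i) * f i)"
    by (simp add: binomial_eq_0)
  have h4: "(\<Sum>i\<le>N. (-1)^(Suc i) * of_nat (N choose i) * f (Suc i)) = - (\<Sum>i\<le>N. (-1)^i * of_nat (N choose i) * f (Suc i))"
    by (simp add: sum_negf[symmetric])
  have "(\<Sum>i\<le>Suc N. (-1)^i * of_nat (Suc N choose i) * f i) =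
      (f 0 + (\<Sum>i\<le>N. (-1)^(Suc i) * of_nat (N choose Suc i) * f (Suc i))) + (\<Sum>i\<le>N. (-1)^(Suc i) * of_nat (N choose i) * f (Suc i))"
    unfolding h1 by (simp only: ac_simps)
  also have "\<dots> = (\<Sum>i\<le>N. (-1)^i * of_nat (N choose i) * f i) + - (\<Sum>i\<le>N. (-1)^i * of_nat (N choose i) * f (Suc i))"
    unfolding h2 h3 h4 by (rule refl)
  finally show ?thesis by simp
qed

definition dd :: "nat \<Rightarrow> nat \<Rightarrow> real" where
  "dd m N = (\<Sum>i\<le>N. (-1)^i * real (N choose i) * harm2 (m + i))"

lemma dd_Suc: "dd m (Suc N) = dd m N - dd (Suc m) N"
  unfolding dd_def by (subst pascal_alt) simp

lemma alg_step0:
  fixes X fm fK F p q K :: real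
  assumes "p > 0" "q > 0" "F > 0" "p = q + K + 1"
  shows "-X*fm*fK/F - (-(X + 1/p - 1/q) * (q*fm)*fK/(p*F))
    = -(X + 1/p)*fm*((K+1)*fK)/(p*F)"
proof -
  have pq: "p - q = K + 1" "q - p = -(K+1)" using assms(4) by simp_all
  have i: "-X*p + (X + 1/p - 1/q) * q = -(X + 1/p)*(K+1)"
  proof -
    have "-X*p + (X + 1/p - 1/q) * q = -X*(p-q) + (q - p)/p"
      using assms(1,2) by (simp add: field_simps)
    also have "\<dots> = -X*(K+1) + (-(K+1))/p" unfolding pq by (rule refl)
    also have "\<dots> = -(X + 1/p)*(K+1)" by (simp add: algebra_simps add_divide_distrib[symmetric])
    finally show ?thesis .
  qed
  have "-X*fm*fK/F - (-(X + 1/p - 1/q) * (q*fm)*fK/(p*F)) = fm*fK/(p*F) * (-X*p + (X + 1/p - 1/q) * q)"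
    using assms(1,3) by (simp add: field_simps)
  also have "\<dots> = fm*fK/(p*F) * (-(X + 1/p)*(K+1))" by (simp only: i)
  also have "\<dots> = -(X + 1/p)*fm*((K+1)*fK)/(p*F)" by (simp add: field_simps)
  finally show ?thesis .
qed

lemma alg_step:
  fixes A h0 fm fK F m K :: real
  assumes "m \<ge> 0" "K \<ge> 0" "F > 0"
  shows "-(A - h0)*fm*fK/F - (-(A + 1/(m+K+2) - h0 - 1/(m+1)) * ((m+1)*fm)*fK/((m+K+2)*F))
    = -(A + 1/(m+K+2) - h0)*fm*((K+1)*fK)/((m+K+2)*F)"
  using alg_step0[of "m+K+2" "m+1" F K "A - h0" fm fK] assms by (simp add: algebra_simps)

lemma dd_formula: "dd m (Suc K) = -(harm1 (m+K+1) - harm1 m) * fact m * fact K / fact (m+K+1)"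
proof (induction K arbitrary: m)
  case 0
  have "(fact m::real) > 0" by simp
  then show ?case unfolding dd_def by (simp add: harm2_Suc harm1_Suc divide_simps power2_eq_square)
next
  case (Suc K)
  have e1: "harm1 (Suc m + K + 1) = harm1 (m+K+1) + 1 / (real m + real K + 2)"
    using harm1_Suc[of "m+K+1"] by (simp add: add_ac)
  have e2: "harm1 (Suc m) = harm1 m + 1 / (real m + 1)" by (simp add: harm1_Suc)
  have e3: "(fact (Suc m)::real) = (real m + 1) * fact m" by (simp add: fact_Suc)
  have e4: "(fact (Suc m + K + 1)::real) = (real m + real K + 2) * fact (m+K+1)"
    using fact_Suc[of "m+K+1", where 'a=real] by (simp add: add_ac)
  have e5: "harm1 (m + Suc K + 1) = harm1 (m+K+1) + 1 / (real m + real K + 2)"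
    using harm1_Suc[of "m+K+1"] by (simp add: add_ac)
  have e6: "(fact (m + Suc K + 1)::real) = (real m + real K + 2) * fact (m+K+1)"
    using fact_Suc[of "m+K+1", where 'a=real] by (simp add: add_ac)
  have e7: "(fact (Suc K)::real) = (real K + 1) * fact K" by (simp add: fact_Suc)
  have "dd m (Suc (Suc K)) = dd m (Suc K) - dd (Suc m) (Suc K)" by (rule dd_Suc)
  also have "\<dots> = -(harm1 (m+K+1) - harm1 m) * fact m * fact K / fact (m+K+1)
      - (-(harm1 (m+K+1) + 1 / (real m + real K + 2) - harm1 m - 1 / (real m + 1)) * ((real m + 1) * fact m) * fact K / ((real m + real K + 2) * fact (m+K+1)))"
    unfolding Suc.IH e1 e2 e3 e4 by (simp add: algebra_simps)
  also have "\<dots> = -(harm1 (m+K+1) + 1 / (real m + real K + 2) - harm1 m) * fact m * ((real K + 1) * fact K) / ((real m + real K + 2) * fact (m+K+1))"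
    by (rule alg_step) auto
  also have "\<dots> = -(harm1 (m+Suc K+1) - harm1 m) * fact m * fact (Suc K) / fact (m+Suc K+1)"
    unfolding e5 e6 e7 by simp
  finally show ?case .
qed


lemma sum_from_m:
  fixes g :: "nat \<Rightarrow> 'a::comm_ring_1"
  assumes "m \<le> n"
  shows "(\<Sum>k\<le>n. of_nat (k choose m) * g k) = (\<Sum>i\<le>n-m. of_nat ((m+i) choose m) * g (m+i))"
proof -
  have "(\<Sum>k\<le>n. of_nat (k choose m) * g k) = (\<Sum>k\<in>{m..n}. of_nat (k choose m) * g k)"
    by (rule sum.mono_neutral_right) (auto simp: binomial_eq_0)
  also have "\<dots> = (\<Sum>i\<in>{0..n-m}. of_nat ((i+m) choose m) * g (i+m))"
    using sum.shift_bounds_cl_nat_ivl[of "\<lambda>k. of_nat (k choose m) * g k" 0 m "n-m"] assms by simp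
  finally show ?thesis by (simp add: atLeast0AtMost add.commute)
qed

lemma coef_sum:
  assumes "m \<le> n"
  shows "(-1)^m * (\<Sum>k\<le>n. (-1)^k * real (n choose k) * real (k choose m) * harm2 k) = real (n choose m) * dd m (n - m)"
proof -
  have "(\<Sum>k\<le>n. (-1)^k * real (n choose k) * real (k choose m) * harm2 k)
     = (\<Sum>k\<le>n. real (k choose m) * ((-1)^k * real (n choose k) * harm2 k))"
    by (simp add: algebra_simps)
  also have "\<dots> = (\<Sum>i\<le>n-m. real ((m+i) choose m) * ((-1)^(m+i) * real (n choose (m+i)) * harm2 (m+i)))"
    using sum_from_m[OF assms, of "\<lambda>k. (-1)^k * real (n choose k) * harm2 k"] by simp
  also have "\<dots> = (\<Sum>i\<le>n-m. (-1)^m * real (n choose m) * ((-1)^i * real ((n-m) choose i) * harm2 (m+i)))"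
  proof (rule sum.cong[OF refl])
    fix i assume "i \<in> {..n-m}"
    then have "m + i \<le> n" using assms by auto
    then have "(n choose (m+i)) * ((m+i) choose m) = (n choose m) * ((n-m) choose i)"
      using choose_mult[of m "m+i" n] by simp
    then have "real (n choose (m+i)) * real ((m+i) choose m) = real (n choose m) * real ((n-m) choose i)"
      by (metis of_nat_mult)
    then show "real ((m+i) choose m) * ((-1)^(m+i) * real (n choose (m+i)) * harm2 (m+i)) =
      (-1)^m * real (n choose m) * ((-1)^i * real ((n-m) choose i) * harm2 (m+i))"
      by (simp add: power_add algebra_simps)
  qed
  also have "\<dots> = (-1)^m * real (n choose m) * dd m (n-m)"
    unfolding dd_def by (simp add: sum_distrib_left)
  finally show ?thesis by simp
qed

lemma gen_canc:
  fixes c a b k X :: real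
  assumes "c > 0" "a > 0" "b > 0" "k > 0"
  shows "c * (-X * a * b / (a * (k * b) * c)) = -X / k"
  using assms by (simp add: field_simps)

lemma coef_val:
  assumes "m < n"
  shows "(-1)^m * (\<Sum>k\<le>n. (-1)^k * real (n choose k) * real (k choose m) * harm2 k) = -(harm1 n - harm1 m) / real (n - m)"
proof -
  obtain K where K: "n - m = Suc K" using assms by (metis Suc_diff_Suc)
  have n: "n = m + K + 1" using K assms by simp
  have f: "(fact n::real) = fact m * fact (Suc K) * real (n choose m)"
    using binomial_fact_lemma[of m n] assms K by (metis less_imp_le of_nat_fact of_nat_mult)
  have "(-1)^m * (\<Sum>k\<le>n. (-1)^k * real (n choose k) * real (k choose m) * harm2 k) = real (n choose m) * dd m (Suc K)"
    using coef_sum[of m n] assms K by simp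
  also have "\<dots> = real (n choose m) * (-(harm1 n - harm1 m) * fact m * fact K / fact n)"
    by (simp add: dd_formula n)
  also have "\<dots> = -(harm1 n - harm1 m) / real (Suc K)"
  proof -
    have "real (n choose m) > 0" using assms by simp
    moreover have "(fact m::real) > 0" "(fact K::real) > 0" by simp_all
    ultimately show ?thesis unfolding f fact_Suc
      using gen_canc[of "real (n choose m)" "fact m" "fact K" "real K + 1" "harm1 n - harm1 m"] by (simp add: add.commute)
  qed
  finally show ?thesis using K by simp
qed

lemma coef_n: "(-1)^n * (\<Sum>k\<le>n. (-1)^k * real (n choose k) * real (k choose n) * harm2 k) = harm2 n"
  using coef_sum[of n n] by (simp add: dd_def)


lemma core:
  fixes s :: "nat \<Rightarrow> complex"
  shows "(\<Sum>k=0..n. (-1)^k * of_nat (n choose k) * (\<Sum>m\<le>k. (-1)^m * of_nat (k choose m) * s m) * of_real (harm2 k))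
    = s n * of_real (harm2 n) - (\<Sum>m<n. of_real ((harm1 n - harm1 m) / real (n - m)) * s m)"
proof -
  define c where "c m = (-1)^m * (\<Sum>k\<le>n. (-1)^k * real (n choose k) * real (k choose m) * harm2 k)" for m
  have inner: "(\<Sum>m\<le>k. (-1)^m * of_nat (k choose m) * s m) = (\<Sum>m\<le>n. (-1)^m * of_nat (k choose m) * s m)"
    if "k \<le> n" for k
    by (rule sum.mono_neutral_left) (use that in \<open>auto simp: binomial_eq_0\<close>)
  have "(\<Sum>k=0..n. (-1)^k * of_nat (n choose k) * (\<Sum>m\<le>k. (-1)^m * of_nat (k choose m) * s m) * of_real (harm2 k))
      = (\<Sum>k\<le>n. \<Sum>m\<le>n. (-1)^k * of_nat (n choose k) * ((-1)^m * of_nat (k choose m) * s m) * of_real (harm2 k))"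
    by (simp add: atLeast0AtMost inner sum_distrib_left sum_distrib_right)
  also have "\<dots> = (\<Sum>m\<le>n. \<Sum>k\<le>n. (-1)^k * of_nat (n choose k) * ((-1)^m * of_nat (k choose m) * s m) * of_real (harm2 k))"
    by (rule sum.swap)
  also have "\<dots> = (\<Sum>m\<le>n. s m * of_real (c m))"
  proof (rule sum.cong[OF refl])
    fix m
    show "(\<Sum>k\<le>n. (-1)^k * of_nat (n choose k) * ((-1)^m * of_nat (k choose m) * s m) * of_real (harm2 k)) = s m * of_real (c m)"
      unfolding c_def by (simp add: sum_distrib_left sum_distrib_right algebra_simps)
  qed
  also have "\<dots> = s n * of_real (c n) + (\<Sum>m<n. s m * of_real (c m))"
    by (simp add: lessThan_Suc_atMost[symmetric])
  also have "\<dots> = s n * of_real (harm2 n) - (\<Sum>m<n. of_real ((harm1 n - harm1 m) / real (n - m)) * s m)"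
  proof -
    have "c n = harm2 n" unfolding c_def by (rule coef_n)
    moreover have "(\<Sum>m<n. s m * of_real (c m)) = - (\<Sum>m<n. of_real ((harm1 n - harm1 m) / real (n - m)) * s m)"
      unfolding sum_negf[symmetric]
    proof (rule sum.cong[OF refl])
      fix m assume "m \<in> {..<n}"
      then have "c m = -(harm1 n - harm1 m) / real (n - m)" unfolding c_def by (intro coef_val) auto
      then show "s m * of_real (c m) = - (of_real ((harm1 n - harm1 m) / real (n - m)) * s m)"
        by (simp add: algebra_simps minus_divide_left)
    qed
    ultimately show ?thesis by simp
  qed
  finally show ?thesis .
qed


lemma Re_pos_not_nonpos: "Re z > 0 \<Longrightarrow> z \<notin> \<int>\<^sub>\<le>\<^sub>0"
  by (auto elim!: nonpos_Ints_cases)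

lemma Gamma_nz: "Re (z::complex) > 0 \<Longrightarrow> Gamma z \<noteq> 0"
  by (simp add: Gamma_eq_zero_iff Re_pos_not_nonpos)

lemma chu:
  fixes \<alpha> \<gamma> :: complex
  assumes "Re \<gamma> > 0"
  shows "pochhammer \<alpha> k / pochhammer \<gamma> k = (\<Sum>m\<le>k. (-1)^m * of_nat (k choose m) * (pochhammer (\<gamma>-\<alpha>) m / pochhammer \<gamma> m))"
proof -
  have c: "\<forall>i \<in> {0..<k}. \<gamma> \<noteq> - of_nat i"
  proof
    fix i assume "i \<in> {0..<k}"
    show "\<gamma> \<noteq> - of_nat i" using assms by (auto)
  qed
  have e: "pochhammer (- of_nat k) m / fact m = (-1)^m * (of_nat (k choose m) :: complex)" for m
  proof -
    have "(of_nat (k choose m) :: complex) = (-1)^m * pochhammer (- of_nat k) m / fact m"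
      by (simp add: binomial_gbinomial gbinomial_pochhammer)
    then have "(-1)^m * (of_nat (k choose m) :: complex) = ((-1)^m * (-1)^m) * pochhammer (- of_nat k) m / fact m"
      by simp
    also have "(-1)^m * (-1)^m = (1::complex)" by (simp flip: power_add)
    finally show ?thesis by simp
  qed
  have "pochhammer \<alpha> k / pochhammer \<gamma> k = (\<Sum>m=0..k. (pochhammer (\<gamma>-\<alpha>) m * pochhammer (- (of_nat k)) m) /
    (of_nat (fact m) * pochhammer \<gamma> m))"
    using Vandermonde_pochhammer[OF c, of "\<gamma>-\<alpha>"] by simp
  also have "\<dots> = (\<Sum>m\<le>k. (-1)^m * of_nat (k choose m) * (pochhammer (\<gamma>-\<alpha>) m / pochhammer \<gamma> m))"
    unfolding atLeast0AtMost
  proof (rule sum.cong[OF refl])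
    fix m
    have "(pochhammer (\<gamma>-\<alpha>) m * pochhammer (- (of_nat k)) m) / (of_nat (fact m) * pochhammer \<gamma> m)
      = (pochhammer (- of_nat k) m / fact m) * (pochhammer (\<gamma>-\<alpha>) m / pochhammer \<gamma> m)"
      by simp
    then show "(pochhammer (\<gamma>-\<alpha>) m * pochhammer (- (of_nat k)) m) / (of_nat (fact m) * pochhammer \<gamma> m)
      = (-1)^m * of_nat (k choose m) * (pochhammer (\<gamma>-\<alpha>) m / pochhammer \<gamma> m)"
      unfolding e by simp
  qed
  finally show ?thesis .
qed

lemma gb1:
  fixes u v :: complex
  assumes "Re u > -1" "Re v > -1"
  shows "cbinom (2 * of_nat k + v) ((2 * of_nat k + v)/2) * inverse (cbinom ((2 * of_nat k + u + v)/2) (u/2))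
    = Gamma (u/2+1) * Gamma (2 * of_nat k + v + 1) / (Gamma (of_nat k + v/2 + 1) * Gamma (of_nat k + (u+v)/2 + 1))"
proof -
  have a1: "(2 * of_nat k + v)/2 + 1 = of_nat k + v/2 + 1" by (simp add: field_simps)
  have a2: "(2 * of_nat k + v) - (2 * of_nat k + v)/2 + 1 = of_nat k + v/2 + 1" by (simp add: field_simps)
  have a3: "(2 * of_nat k + u + v)/2 + 1 = of_nat k + (u+v)/2 + 1" by (simp add: field_simps)
  have a4: "(2 * of_nat k + u + v)/2 - u/2 + 1 = of_nat k + v/2 + 1" by (simp add: field_simps)
  have n1: "Gamma (of_nat k + v/2 + 1) \<noteq> 0" using assms by (intro Gamma_nz) simp
  have re: "Re (of_nat k + (u+v)/2 + 1) = real k + (Re u + Re v)/2 + 1" by simp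
  have n2: "Gamma (of_nat k + (u+v)/2 + 1) \<noteq> 0" apply (rule Gamma_nz) unfolding re using assms of_nat_0_le_iff[of k, where 'a=real] by (simp add: field_simps)
  have n3: "Gamma (u/2 + 1) \<noteq> 0" using assms by (intro Gamma_nz) simp
  show ?thesis unfolding cbinom_def a1 a2 a3 a4 using n1 n2 n3 by (simp add: field_simps)
qed

lemma gb2:
  fixes u v :: complex
  assumes "Re u > -1" "Re v > -1"
  shows "cbinom (2 * of_nat k + u) ((2 * of_nat k + u)/2) * inverse (cbinom ((2 * of_nat k + u + v)/2) (v/2))
    = Gamma (v/2+1) * Gamma (2 * of_nat k + u + 1) / (Gamma (of_nat k + u/2 + 1) * Gamma (of_nat k + (u+v)/2 + 1))"
proof -
  have a1: "(2 * of_nat k + u)/2 + 1 = of_nat k + u/2 + 1" by (simp add: field_simps)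
  have a2: "(2 * of_nat k + u) - (2 * of_nat k + u)/2 + 1 = of_nat k + u/2 + 1" by (simp add: field_simps)
  have a3: "(2 * of_nat k + u + v)/2 + 1 = of_nat k + (u+v)/2 + 1" by (simp add: field_simps)
  have a4: "(2 * of_nat k + u + v)/2 - v/2 + 1 = of_nat k + u/2 + 1" by (simp add: field_simps)
  have n1: "Gamma (of_nat k + u/2 + 1) \<noteq> 0" using assms by (intro Gamma_nz) simp
  have re: "Re (of_nat k + (u+v)/2 + 1) = real k + (Re u + Re v)/2 + 1" by simp
  have n2: "Gamma (of_nat k + (u+v)/2 + 1) \<noteq> 0" apply (rule Gamma_nz) unfolding re using assms of_nat_0_le_iff[of k, where 'a=real] by (simp add: field_simps)
  have n3: "Gamma (v/2 + 1) \<noteq> 0" using assms by (intro Gamma_nz) simp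
  show ?thesis unfolding cbinom_def a1 a2 a3 a4 using n1 n2 n3 by (simp add: field_simps)
qed


definition PP :: "complex \<Rightarrow> complex \<Rightarrow> nat \<Rightarrow> complex" where
  "PP u v k = 2 powi (-(2 * int k)) * Gamma (2 * of_nat k + v + 1) / (Gamma (of_nat k + v/2 + 1) * Gamma (of_nat k + (u+v)/2 + 1))"

lemma gam2:
  fixes C :: complex
  assumes "C \<notin> \<int>\<^sub>\<le>\<^sub>0" "C + 1 \<notin> \<int>\<^sub>\<le>\<^sub>0"
  shows "Gamma (C + 1 + 1) = (C + 1) * C * Gamma C"
  using Gamma_plus1[OF assms(1)] Gamma_plus1[OF assms(2)] by simp

lemma alg2:
  fixes X G1 G2 G3 A B C D B' :: complex
  assumes "A \<noteq> 0" "B \<noteq> 0" "G2 \<noteq> 0" "G3 \<noteq> 0" "D = C/2" "B' = B"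
  shows "X / 4 * ((2*A) * C * G1) / ((A*G2) * (B*G3)) = X * G1 / (G2 * G3) * D / B'"
  using assms by (simp add: field_simps)

lemma PP_Suc:
  assumes "Re u > -1" "Re v > -1"
  shows "PP u v (Suc k) = PP u v k * ((v/2 + 1/2) + of_nat k) / (((u+v)/2 + 1) + of_nat k)"
proof -
  have rk: "real k \<ge> 0" by simp
  have g1: "Gamma (2 * of_nat (Suc k) + v + 1) = (2 * of_nat k + v + 2) * (2 * of_nat k + v + 1) * Gamma (2 * of_nat k + v + 1)"
  proof -
    have x: "2 * of_nat (Suc k) + v + 1 = ((2 * of_nat k + v + 1) + 1) + 1" by simp
    have x2: "2 * of_nat k + v + 1 + 1 = 2 * of_nat k + v + 2" by simp
    have r1: "Re (2 * of_nat k + v + 1) > 0" using assms rk by (simp add: field_simps)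
    have r2: "Re (2 * of_nat k + v + 1 + 1) > 0" using assms rk by (simp add: field_simps)
    show ?thesis unfolding x
      using gam2[OF Re_pos_not_nonpos[OF r1] Re_pos_not_nonpos[OF r2]] unfolding x2 .
  qed
  have g2: "Gamma (of_nat (Suc k) + v/2 + 1) = (of_nat k + v/2 + 1) * Gamma (of_nat k + v/2 + 1)"
  proof -
    have x: "of_nat (Suc k) + v/2 + 1 = (of_nat k + v/2 + 1) + 1" by simp
    have r1: "Re (of_nat k + v/2 + 1) > 0" using assms rk by (simp add: field_simps)
    show ?thesis unfolding x using Gamma_plus1[OF Re_pos_not_nonpos[OF r1]] by simp
  qed
  have g3: "Gamma (of_nat (Suc k) + (u+v)/2 + 1) = (of_nat k + (u+v)/2 + 1) * Gamma (of_nat k + (u+v)/2 + 1)"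
  proof -
    have x: "of_nat (Suc k) + (u+v)/2 + 1 = (of_nat k + (u+v)/2 + 1) + 1" by simp
    have r1: "Re (of_nat k + (u+v)/2 + 1) > 0" using assms rk by (simp add: field_simps)
    show ?thesis unfolding x using Gamma_plus1[OF Re_pos_not_nonpos[OF r1]] by simp
  qed
  have p: "(2::complex) powi (-(2 * int (Suc k))) = 2 powi (-(2 * int k)) / 4"
  proof -
    have i: "-(2 * int (Suc k)) = -(2 * int k) + (-2)" by simp
    have "(2::complex) powi (-2) = 1/4" by (simp add: power_int_minus)
    then show ?thesis unfolding i by (subst power_int_add) auto
  qed
  have nz1: "Gamma (of_nat k + v/2 + 1) \<noteq> 0" using assms rk by (intro Gamma_nz) (simp add: field_simps)
  have nz2: "Gamma (of_nat k + (u+v)/2 + 1) \<noteq> 0" using assms rk by (intro Gamma_nz) (simp add: field_simps)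
  have nz3: "of_nat k + v/2 + 1 \<noteq> (0::complex)"
  proof
    assume "of_nat k + v/2 + 1 = (0::complex)"
    then have "Re (of_nat k + v/2 + 1) = 0" by simp
    then show False using assms rk by (simp add: field_simps)
  qed
  have nz4: "of_nat k + (u+v)/2 + 1 \<noteq> (0::complex)"
  proof
    assume "of_nat k + (u+v)/2 + 1 = (0::complex)"
    then have "Re (of_nat k + (u+v)/2 + 1) = 0" by simp
    then show False using assms rk by (simp add: field_simps)
  qed
  have e: "(2 * of_nat k + v + 2) = 2 * (of_nat k + v/2 + 1 :: complex)" by (simp add: field_simps)
  show ?thesis unfolding PP_def g1 g2 g3 p e
    by (rule alg2[OF nz3 nz4 nz1 nz2]) (simp_all add: field_simps)
qed

lemma PP_poch:
  assumes "Re u > -1" "Re v > -1"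
  shows "PP u v k = PP u v 0 * pochhammer (v/2 + 1/2) k / pochhammer ((u+v)/2 + 1) k"
proof (induction k)
  case 0
  then show ?case by simp
next
  case (Suc k)
  have nz: "pochhammer ((u+v)/2 + 1) k \<noteq> 0"
  proof -
    have "(u+v)/2 + 1 \<noteq> - of_nat j" for j
    proof
      assume "(u+v)/2 + 1 = - of_nat j"
      then have "Re ((u+v)/2 + 1) = Re (- of_nat j)" by (rule arg_cong)
      then have "Re ((u+v)/2 + 1) = - real j" by simp
      then show False using assms by (simp add: field_simps)
    qed
    then show ?thesis by (simp add: pochhammer_eq_0_iff)
  qed
  have nz2: "((u+v)/2 + 1) + of_nat k \<noteq> 0"
  proof
    assume "((u+v)/2 + 1) + of_nat k = 0"
    then have "Re (((u+v)/2 + 1) + of_nat k) = 0" by simp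
    then show False using assms by (simp add: field_simps)
  qed
  show ?case unfolding PP_Suc[OF assms] Suc.IH pochhammer_Suc using nz nz2 by (simp add: field_simps)
qed


lemma complex_part:
  fixes u v :: complex and n :: nat
  assumes u: "Re u > -1" and v: "Re v > -1"
  shows "(\<Sum>k=0..n. (-1)^k * of_nat (n choose k) * 2 powi (-(2 * int k))
              * cbinom (2 * of_nat k + v) ((2 * of_nat k + v) / 2)
              * inverse (cbinom ((2 * of_nat k + u + v) / 2) (u / 2))
              * of_real (harm2 k))
          = cbinom v (v / 2) * inverse (cbinom u (u / 2))
              * cbinom (2 * of_nat n + u) ((2 * of_nat n + u) / 2)
              * inverse (cbinom ((2 * of_nat n + u + v) / 2) (v / 2))
              * 2 powi (-(2 * int n)) * of_real (harm2 n)
            - cbinom v (v / 2) * inverse (cbinom u (u / 2))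
              * (\<Sum>k<n. of_real ((harm1 n - harm1 k) / real (n - k))
                  * cbinom (2 * of_nat k + u) ((2 * of_nat k + u) / 2)
                  * 2 powi (-(2 * int k))
                  * inverse (cbinom ((2 * of_nat k + u + v) / 2) (v / 2)))"
proof -
  define \<alpha> where "\<alpha> = v/2 + 1/2"
  define \<gamma> where "\<gamma> = (u+v)/2 + 1"
  define r where "r k = pochhammer \<alpha> k / pochhammer \<gamma> k" for k
  define s where "s k = pochhammer (\<gamma> - \<alpha>) k / pochhammer \<gamma> k" for k
  define K1 where "K1 = Gamma (u/2+1) * PP u v 0"
  define Kc where "Kc = cbinom v (v / 2) * inverse (cbinom u (u / 2))"
  define G where "G = Gamma (v/2+1) * PP v u 0"
  have ga: "\<gamma> - \<alpha> = u/2 + 1/2" unfolding \<alpha>_def \<gamma>_def by (simp add: field_simps)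
  have vu: "(v+u)/2 + 1 = \<gamma>" unfolding \<gamma>_def by (simp add: add.commute)
  have Reg: "Re \<gamma> > 0" unfolding \<gamma>_def using u v by (simp add: field_simps)
  have t1: "2 powi (-(2 * int k)) * cbinom (2 * of_nat k + v) ((2 * of_nat k + v) / 2)
              * inverse (cbinom ((2 * of_nat k + u + v) / 2) (u / 2)) = K1 * r k" for k
  proof -
    have "2 powi (-(2 * int k)) * cbinom (2 * of_nat k + v) ((2 * of_nat k + v) / 2)
              * inverse (cbinom ((2 * of_nat k + u + v) / 2) (u / 2))
        = 2 powi (-(2 * int k)) * (cbinom (2 * of_nat k + v) ((2 * of_nat k + v) / 2)
              * inverse (cbinom ((2 * of_nat k + u + v) / 2) (u / 2)))" by (simp only: mult.assoc)
    also have "\<dots> = Gamma (u/2+1) * PP u v k"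
      unfolding gb1[OF u v] PP_def by simp
    also have "\<dots> = K1 * r k"
      unfolding PP_poch[OF u v, of k] K1_def r_def \<alpha>_def \<gamma>_def by simp
    finally show ?thesis .
  qed
  have t2: "cbinom (2 * of_nat k + u) ((2 * of_nat k + u) / 2) * 2 powi (-(2 * int k))
              * inverse (cbinom ((2 * of_nat k + u + v) / 2) (v / 2)) = G * s k" for k
  proof -
    have "cbinom (2 * of_nat k + u) ((2 * of_nat k + u) / 2) * 2 powi (-(2 * int k))
              * inverse (cbinom ((2 * of_nat k + u + v) / 2) (v / 2))
        = 2 powi (-(2 * int k)) * (cbinom (2 * of_nat k + u) ((2 * of_nat k + u) / 2)
              * inverse (cbinom ((2 * of_nat k + u + v) / 2) (v / 2)))" by (simp only: mult_ac)
    also have "\<dots> = Gamma (v/2+1) * PP v u k"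
      unfolding gb2[OF u v] PP_def by (simp add: add.commute)
    also have "\<dots> = G * s k"
      unfolding PP_poch[OF v u, of k] G_def s_def ga vu by (simp add: \<alpha>_def \<gamma>_def)
    finally show ?thesis .
  qed
  have KK: "Kc * G = K1"
  proof -
    have e1: "v - v/2 + 1 = v/2 + 1" "u - u/2 + 1 = u/2 + 1" by (simp_all add: field_simps)
    have n1: "Gamma (u + 1) \<noteq> 0" "Gamma (u/2 + 1) \<noteq> 0" "Gamma (v/2 + 1) \<noteq> 0"
      using u v by (auto intro!: Gamma_nz simp: field_simps)
    have n2: "Gamma ((u+v)/2 + 1) \<noteq> 0" using u v by (intro Gamma_nz) (simp add: field_simps)
    have vu2: "(v+u)/2 + 1 = (u+v)/2 + 1" by (simp add: add.commute)
    show ?thesis unfolding Kc_def G_def K1_def PP_def cbinom_def e1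
      using n1 n2 by (simp add: vu2 field_simps)
  qed
  have "(\<Sum>k=0..n. (-1)^k * of_nat (n choose k) * 2 powi (-(2 * int k))
              * cbinom (2 * of_nat k + v) ((2 * of_nat k + v) / 2)
              * inverse (cbinom ((2 * of_nat k + u + v) / 2) (u / 2))
              * of_real (harm2 k))
      = (\<Sum>k=0..n. K1 * ((-1)^k * of_nat (n choose k) * (\<Sum>m\<le>k. (-1)^m * of_nat (k choose m) * s m) * of_real (harm2 k)))"
  proof (rule sum.cong[OF refl])
    fix k
    have "r k = (\<Sum>m\<le>k. (-1)^m * of_nat (k choose m) * s m)"
      unfolding r_def s_def by (rule chu[OF Reg])
    then show "(-1)^k * of_nat (n choose k) * 2 powi (-(2 * int k))
              * cbinom (2 * of_nat k + v) ((2 * of_nat k + v) / 2)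
              * inverse (cbinom ((2 * of_nat k + u + v) / 2) (u / 2))
              * of_real (harm2 k) =
      K1 * ((-1)^k * of_nat (n choose k) * (\<Sum>m\<le>k. (-1)^m * of_nat (k choose m) * s m) * of_real (harm2 k))"
      using t1[of k] by (simp add: mult_ac)
  qed
  also have "\<dots> = K1 * (s n * of_real (harm2 n) - (\<Sum>m<n. of_real ((harm1 n - harm1 m) / real (n - m)) * s m))"
    by (simp add: sum_distrib_left[symmetric] core)
  also have "\<dots> = Kc * (G * s n) * of_real (harm2 n) - Kc * (\<Sum>k<n. of_real ((harm1 n - harm1 k) / real (n - k)) * (G * s k))"
    unfolding KK[symmetric] by (simp add: algebra_simps sum_distrib_left)
  also have "\<dots> = cbinom v (v / 2) * inverse (cbinom u (u / 2))
              * cbinom (2 * of_nat n + u) ((2 * of_nat n + u) / 2)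
              * inverse (cbinom ((2 * of_nat n + u + v) / 2) (v / 2))
              * 2 powi (-(2 * int n)) * of_real (harm2 n)
            - cbinom v (v / 2) * inverse (cbinom u (u / 2))
              * (\<Sum>k<n. of_real ((harm1 n - harm1 k) / real (n - k))
                  * cbinom (2 * of_nat k + u) ((2 * of_nat k + u) / 2)
                  * 2 powi (-(2 * int k))
                  * inverse (cbinom ((2 * of_nat k + u + v) / 2) (v / 2)))"
    unfolding t2[symmetric] Kc_def by (simp only: mult_ac)
  finally show ?thesis .
qed


lemma Gamma_nat1: "Gamma (of_nat m + 1 :: complex) = fact m"
  using Gamma_fact[of m, where 'a=complex] by (simp add: add.commute)

lemma cb_nat:
  assumes "j \<le> m"
  shows "cbinom (of_nat m) (of_nat j) = of_nat (m choose j)"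
proof -
  have "of_nat m - of_nat j = (of_nat (m - j) :: complex)" using assms by (simp add: of_nat_diff)
  then have "cbinom (of_nat m) (of_nat j) = fact m / (fact j * fact (m - j))"
    unfolding cbinom_def by (simp add: Gamma_nat1)
  also have "\<dots> = of_nat (m choose j)" using assms by (simp add: binomial_fact)
  finally show ?thesis .
qed

lemma h1: "cbinom (2 * of_nat k + 0) ((2 * of_nat k + 0) / 2) = of_nat ((2*k) choose k)"
proof -
  have "cbinom (2 * of_nat k + 0) ((2 * of_nat k + 0) / 2) = cbinom (of_nat (2*k)) (of_nat k)" by simp
  also have "\<dots> = of_nat ((2*k) choose k)" by (rule cb_nat) simp
  finally show ?thesis .
qed

lemma h2: "cbinom ((2 * of_nat k + 0 + 0) / 2) (0 / 2) = 1"
proof -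
  have "cbinom ((2 * of_nat k + 0 + 0) / 2) (0 / 2) = cbinom (of_nat k) (of_nat 0)" by simp
  also have "\<dots> = 1" by (subst cb_nat) simp_all
  finally show ?thesis .
qed

lemma h3: "cbinom 0 (0 / 2) = 1"
  unfolding cbinom_def by simp

lemma real_part:
  fixes n :: nat
  shows "(\<Sum>k=0..n. (-1)^k * real (n choose k) * 2 powi (-(2 * int k)) * real ((2*k) choose k) * harm2 k)
          = real ((2*n) choose n) * 2 powi (-(2 * int n)) * harm2 n
            - (\<Sum>k<n. (harm1 n - harm1 k) / real (n - k) * real ((2*k) choose k) * 2 powi (-(2 * int k)))"
proof -
  have C: "(\<Sum>k=0..n. (-1)^k * of_nat (n choose k) * 2 powi (-(2 * int k)) * of_nat ((2*k) choose k) * of_real (harm2 k))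
     = of_nat ((2*n) choose n) * 2 powi (-(2 * int n)) * of_real (harm2 n)
       - (\<Sum>k<n. of_real ((harm1 n - harm1 k) / real (n - k)) * of_nat ((2*k) choose k) * 2 powi (-(2 * int k)) :: complex)"
    using complex_part[of 0 0 n] unfolding h1 h2 h3 by simp
  have "complex_of_real ((\<Sum>k=0..n. (-1)^k * real (n choose k) * 2 powi (-(2 * int k)) * real ((2*k) choose k) * harm2 k))
     = complex_of_real (real ((2*n) choose n) * 2 powi (-(2 * int n)) * harm2 n
            - (\<Sum>k<n. (harm1 n - harm1 k) / real (n - k) * real ((2*k) choose k) * 2 powi (-(2 * int k))))"
    using C by (simp add: of_real_sum mult_ac)
  then show ?thesis by (simp only: of_real_eq_iff)
qed

theorem theorem36:
  fixes n :: nat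
  shows "((\<Sum>k=0..n. (-1)^k * real (n choose k) * 2 powi (-(2 * int k)) * real ((2*k) choose k) * harm2 k)
          = real ((2*n) choose n) * 2 powi (-(2 * int n)) * harm2 n
            - (\<Sum>k<n. (harm1 n - harm1 k) / real (n - k) * real ((2*k) choose k) * 2 powi (-(2 * int k))))
       \<and> (\<forall>u v :: complex. Re u > -1 \<longrightarrow> Re v > -1 \<longrightarrow>
          (\<Sum>k=0..n. (-1)^k * of_nat (n choose k) * 2 powi (-(2 * int k))
              * cbinom (2 * of_nat k + v) ((2 * of_nat k + v) / 2)
              * inverse (cbinom ((2 * of_nat k + u + v) / 2) (u / 2))
              * of_real (harm2 k))
          = cbinom v (v / 2) * inverse (cbinom u (u / 2))
              * cbinom (2 * of_nat n + u) ((2 * of_nat n + u) / 2)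
              * inverse (cbinom ((2 * of_nat n + u + v) / 2) (v / 2))
              * 2 powi (-(2 * int n)) * of_real (harm2 n)
            - cbinom v (v / 2) * inverse (cbinom u (u / 2))
              * (\<Sum>k<n. of_real ((harm1 n - harm1 k) / real (n - k))
                  * cbinom (2 * of_nat k + u) ((2 * of_nat k + u) / 2)
                  * 2 powi (-(2 * int k))
                  * inverse (cbinom ((2 * of_nat k + u + v) / 2) (v / 2))))"
  using real_part[of n] complex_part[of _ _ n] by blast

end
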